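(* Let $\delta>0$. There exist an integer $N$ and a real $\kappa>0$ such that for all $c\ge0$ and all integers $n\ge\max(N,\kappa c)$, $$\lambda_n(c)\le e^{-\delta(n-\kappa c)} .$$
   Context: For $c>0$, $\lambda_n(c)$, $n\ge0$, are the eigenvalues, arranged so that $1>\lambda_0(c)>\lambda_1(c)>\cdots>0$, of the compact self-adjoint operator on $L^2([-1,1])$ $$F_c\psi(x)=\int_{-1}^1\frac{\sin c(x-y)}{\pi(x-y)}\,\psi(y)\,dy,$$ whose eigenfunctions are the prolate spheroidal wave functions $\psi_{n,c}$ (the bounded solutions of $((1-x^2)\psi')'+(\chi_n(c)-c^2x^2)\psi=0$ on $[-1,1]$ with eigenvalue $\chi_n(c)$ increasing in $n$). *)

theory Defs
  imports "HOL-Analysis.Analysis"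
begin

definition sinc_kernel :: "real \<Rightarrow> real \<Rightarrow> real" where
  "sinc_kernel c t = (if t = 0 then c / pi else sin (c * t) / (pi * t))"

definition is_Fc_eigenvalue :: "real \<Rightarrow> real \<Rightarrow> bool" where
  "is_Fc_eigenvalue c mu \<longleftrightarrow>
     (\<exists>psi :: real \<Rightarrow> real.
        psi \<in> borel_measurable lborel \<and>
        set_integrable lborel {-1..1} (\<lambda>y. (psi y)\<^sup>2) \<and>
        \<not> (AE x in lborel. x \<in> {-1..1} \<longrightarrow> psi x = 0) \<and>
        (AE x in lborel. x \<in> {-1..1} \<longrightarrow>
           (LINT y:{-1..1}|lborel. sinc_kernel c (x - y) * psi y) = mu * psi x))"

text \<open>lambda_n(c): the (n+1)-st largest positive eigenvalue of F_c, i.e. the positive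
  eigenvalue x having exactly n eigenvalues strictly larger than it
  (eigenvalues are simple, so this is the standard enumeration
  lambda_0 > lambda_1 > ...). Convention 0 if no such eigenvalue exists (e.g. c = 0).\<close>
definition prolate_eigenvalue :: "real \<Rightarrow> nat \<Rightarrow> real" where
  "prolate_eigenvalue c n =
     (let P = (\<lambda>x. is_Fc_eigenvalue c x \<and> 0 < x \<and>
                    finite {y. is_Fc_eigenvalue c y \<and> x < y} \<and>
                    card {y. is_Fc_eigenvalue c y \<and> x < y} = n)
      in if (\<exists>x. P x) then (THE x. P x) else 0)"

end

theory Submission
  imports Defs
begin

abbreviation JJ :: "real set" where "JJ \<equiv> {-1..1::real}"

definition L2 :: "(real \<Rightarrow> real) \<Rightarrow> bool" where
 "L2 f \<longleftrightarrow> f \<in> borel_measurable lborel \<and> integrable lborel (\<lambda>x. indicator JJ x * (f x)^2)"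

lemma int_ind_const: "integrable lborel (\<lambda>x. indicator JJ x * (B::real))"
proof -
  have "integrable lborel (\<lambda>x. B * indicator JJ x)"
    by (intro integrable_mult_right integrable_real_indicator) (auto simp: emeasure_lborel_Icc)
  then show ?thesis by (simp add: mult.commute)
qed

lemma ib: fixes f g :: "'a \<Rightarrow> real"
  assumes "integrable M f" "g \<in> borel_measurable M" "\<And>x. \<bar>g x\<bar> \<le> \<bar>f x\<bar>" shows "integrable M g"
  by (rule Bochner_Integration.integrable_bound[OF assms(1,2)]) (use assms(3) in auto)

lemma intJ_bounded: fixes g :: "real \<Rightarrow> real" and B :: real
  assumes "g \<in> borel_measurable lborel" "\<And>x. x \<in> JJ \<Longrightarrow> \<bar>g x\<bar> \<le> B"
  shows "integrable lborel (\<lambda>x. indicator JJ x * g x)"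
proof (rule ib[OF int_ind_const[of B]])
  show "(\<lambda>x. indicator JJ x * g x) \<in> borel_measurable lborel" using assms(1) by measurable
  show "\<bar>indicator JJ x * g x\<bar> \<le> \<bar>indicator JJ x * B\<bar>" for x
    using assms(2)[of x] by (auto split: split_indicator)
qed

lemma abs_le_sq: "\<bar>a::real\<bar> \<le> 1 + a^2"
proof -
  have "0 \<le> (a - 1/2)^2" "0 \<le> (a + 1/2)^2" by simp_all
  then show ?thesis by (simp add: power2_eq_square algebra_simps abs_if)
qed

lemma abs_mult_le_sq: "\<bar>a * b::real\<bar> \<le> (a^2 + b^2) / 2"
proof -
  have "0 \<le> (\<bar>a\<bar> - \<bar>b\<bar>)^2" by simp
  then show ?thesis by (simp add: power2_eq_square abs_mult algebra_simps)
qed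

lemma L2_meas[measurable_dest]: "L2 f \<Longrightarrow> f \<in> borel_measurable borel"
  by (simp add: L2_def)

lemma L2_int: assumes "L2 f" shows "integrable lborel (\<lambda>x. indicator JJ x * f x)"
proof (rule ib)
  show "integrable lborel (\<lambda>x. indicator JJ x * 1 + indicator JJ x * (f x)^2)"
    using assms int_ind_const[of 1] unfolding L2_def by (intro Bochner_Integration.integrable_add) auto
  show "(\<lambda>x. indicator JJ x * f x) \<in> borel_measurable lborel" using assms by measurable
  show "\<bar>indicator JJ x * f x\<bar> \<le> \<bar>indicator JJ x * 1 + indicator JJ x * (f x)^2\<bar>" for x
    using abs_le_sq[of "f x"] by (auto split: split_indicator)
qed

lemma L2_mult: assumes "L2 f" "L2 g" shows "integrable lborel (\<lambda>x. indicator JJ x * (f x * g x))"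
proof (rule ib)
  show "integrable lborel (\<lambda>x. (indicator JJ x * (f x)^2 + indicator JJ x * (g x)^2) / 2)"
    using assms unfolding L2_def by (intro integrable_divide_zero Bochner_Integration.integrable_add) auto
  show "(\<lambda>x. indicator JJ x * (f x * g x)) \<in> borel_measurable lborel" using assms by measurable
  show "\<bar>indicator JJ x * (f x * g x)\<bar> \<le> \<bar>(indicator JJ x * (f x)^2 + indicator JJ x * (g x)^2) / 2\<bar>" for x
    using abs_mult_le_sq[of "f x" "g x"] by (auto split: split_indicator)
qed

lemma L2_bdd_mult: fixes g :: "real \<Rightarrow> real" and B :: real
  assumes "L2 f" "g \<in> borel_measurable lborel" "\<And>x. x \<in> JJ \<Longrightarrow> \<bar>g x\<bar> \<le> B"
  shows "integrable lborel (\<lambda>x. indicator JJ x * (g x * f x))"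
proof (rule ib)
  show "integrable lborel (\<lambda>x. B * \<bar>indicator JJ x * f x\<bar>)"
    using L2_int[OF assms(1)] by auto
  show "(\<lambda>x. indicator JJ x * (g x * f x)) \<in> borel_measurable lborel" using assms by measurable
  show "\<bar>indicator JJ x * (g x * f x)\<bar> \<le> \<bar>B * \<bar>indicator JJ x * f x\<bar>\<bar>" for x
  proof -
    show "\<bar>indicator JJ x * (g x * f x)\<bar> \<le> \<bar>B * \<bar>indicator JJ x * f x\<bar>\<bar>"
    proof (cases "x \<in> JJ")
      case True
      then have "\<bar>g x\<bar> \<le> B" using assms(3) by auto
      then have "\<bar>g x\<bar> * \<bar>f x\<bar> \<le> B * \<bar>f x\<bar>" by (simp add: mult_right_mono)
      moreover have "B * \<bar>f x\<bar> \<le> \<bar>B\<bar> * \<bar>f x\<bar>" by (simp add: mult_right_mono)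
      ultimately show ?thesis using True by (auto simp: abs_mult)
    qed auto
  qed
qed

lemma L2_sum:
  assumes "finite T" "\<And>t. t \<in> T \<Longrightarrow> L2 (f t)"
  shows "L2 (\<lambda>x. \<Sum>t\<in>T. a t * f t x)"
  unfolding L2_def
proof
  show "(\<lambda>x. \<Sum>t\<in>T. a t * f t x) \<in> borel_measurable lborel"
    using assms unfolding L2_def by (intro borel_measurable_sum borel_measurable_times) auto
  have eq: "(\<lambda>x. indicator JJ x * (\<Sum>t\<in>T. a t * f t x)^2) =
     (\<lambda>x. \<Sum>s\<in>T. \<Sum>t\<in>T. (a s * a t) * (indicator JJ x * (f s x * f t x)))"
    by (auto simp: power2_eq_square sum_product sum_distrib_left algebra_simps intro!: sum.cong)
  show "integrable lborel (\<lambda>x. indicator JJ x * (\<Sum>t\<in>T. a t * f t x)^2)"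
    unfolding eq using assms L2_mult by (intro Bochner_Integration.integrable_sum integrable_mult_right) auto
qed

lemma kernel_exists:
  fixes w :: "'a \<Rightarrow> nat \<Rightarrow> real"
  assumes "finite T" "n < card T"
  shows "\<exists>\<alpha>. (\<exists>t\<in>T. \<alpha> t \<noteq> 0) \<and> (\<forall>j<n. (\<Sum>t\<in>T. \<alpha> t * w t j) = 0)"
  using assms
proof (induction n arbitrary: T w)
  case 0
  then obtain t where "t \<in> T" by fastforce
  then show ?case by (intro exI[of _ "\<lambda>_. 1"]) auto
next
  case (Suc n)
  show ?case
  proof (cases "\<forall>t\<in>T. w t n = 0")
    case True
    from Suc.IH[of T w] Suc.prems obtain \<alpha> where a: "\<exists>t\<in>T. \<alpha> t \<noteq> 0" "\<forall>j<n. (\<Sum>t\<in>T. \<alpha> t * w t j) = 0"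
      by auto
    have "\<forall>j<Suc n. (\<Sum>t\<in>T. \<alpha> t * w t j) = 0"
    proof (intro allI impI)
      fix j assume "j < Suc n"
      then consider "j < n" | "j = n" by linarith
      then show "(\<Sum>t\<in>T. \<alpha> t * w t j) = 0"
        by cases (use a True in auto)
    qed
    then show ?thesis using a by blast
  next
    case False
    then obtain t0 where t0: "t0 \<in> T" "w t0 n \<noteq> 0" by auto
    define T' where "T' = T - {t0}"
    define w' where "w' t j = w t j - (w t n / w t0 n) * w t0 j" for t j
    have fin: "finite T'" and cT: "n < card T'" using Suc.prems t0 by (auto simp: T'_def)
    from Suc.IH[OF fin cT, of w'] obtain \<alpha>' where a: "\<exists>t\<in>T'. \<alpha>' t \<noteq> 0"
      "\<forall>j<n. (\<Sum>t\<in>T'. \<alpha>' t * w' t j) = 0" by auto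
    define S where "S = (\<Sum>t\<in>T'. \<alpha>' t * w t n)"
    define \<alpha> where "\<alpha> t = (if t = t0 then - S / w t0 n else \<alpha>' t)" for t
    have split: "(\<Sum>t\<in>T. \<alpha> t * w t j) = \<alpha> t0 * w t0 j + (\<Sum>t\<in>T'. \<alpha>' t * w t j)" for j
    proof -
      have "(\<Sum>t\<in>T. \<alpha> t * w t j) = \<alpha> t0 * w t0 j + (\<Sum>t\<in>T'. \<alpha> t * w t j)"
        unfolding T'_def using t0 Suc.prems(1) by (simp add: sum.remove)
      also have "(\<Sum>t\<in>T'. \<alpha> t * w t j) = (\<Sum>t\<in>T'. \<alpha>' t * w t j)"
        by (intro sum.cong) (auto simp: \<alpha>_def T'_def)
      finally show ?thesis .
    qed
    have "\<forall>j<Suc n. (\<Sum>t\<in>T. \<alpha> t * w t j) = 0"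
    proof (intro allI impI)
      fix j assume "j < Suc n"
      then consider "j < n" | "j = n" by linarith
      then show "(\<Sum>t\<in>T. \<alpha> t * w t j) = 0"
      proof cases
        case 1
        have "0 = (\<Sum>t\<in>T'. \<alpha>' t * w' t j)" using a 1 by auto
        also have "\<dots> = (\<Sum>t\<in>T'. \<alpha>' t * w t j) - S / w t0 n * w t0 j"
          by (simp add: w'_def S_def algebra_simps sum_subtractf sum_distrib_left sum_divide_distrib sum_distrib_right)
        finally show ?thesis unfolding split using t0 by (simp add: \<alpha>_def)
      next
        case 2
        show ?thesis unfolding split 2 using t0 by (simp add: \<alpha>_def S_def)
      qed
    qed
    moreover have "\<exists>t\<in>T. \<alpha> t \<noteq> 0" using a by (auto simp: \<alpha>_def T'_def)
    ultimately show ?thesis by blast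
  qed
qed

lemma poly_shift:
  fixes a :: "nat \<Rightarrow> real"
  shows "\<exists>b. \<forall>y. (\<Sum>i<n. a i * (x - y)^i) = (\<Sum>j<n. b j * y^j)"
proof -
  define b where "b j = (\<Sum>i<n. a i * (of_nat (i choose j) * (-1)^j * x^(i-j)))" for j
  have "(\<Sum>i<n. a i * (x - y)^i) = (\<Sum>j<n. b j * y^j)" for y
  proof -
    have inner: "(x - y)^i = (\<Sum>j<n. of_nat (i choose j) * (-1)^j * x^(i-j) * y^j)" if "i < n" for i
    proof -
      have "(x - y)^i = (-y + x)^i" by simp
      also have "\<dots> = (\<Sum>j\<le>i. of_nat (i choose j) * (-y)^j * x^(i-j))"
        by (rule binomial_ring)
      also have "\<dots> = (\<Sum>j<n. of_nat (i choose j) * (-y)^j * x^(i-j))"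
        apply (rule sum.mono_neutral_left)
          apply simp
        using that apply (simp add: subset_eq)
        apply (simp add: binomial_eq_0)
        done
      also have "\<dots> = (\<Sum>j<n. of_nat (i choose j) * (-1)^j * x^(i-j) * y^j)"
      proof (intro sum.cong refl)
        fix j
        have "(-y)^j = (-1)^j * y^j" by (metis mult_minus1 power_mult_distrib)
        then show "of_nat (i choose j) * (-y)^j * x^(i-j) = of_nat (i choose j) * (-1)^j * x^(i-j) * y^j"
          by (simp only: mult_ac)
      qed
      finally show ?thesis .
    qed
    have "(\<Sum>i<n. a i * (x - y)^i) = (\<Sum>i<n. \<Sum>j<n. a i * (of_nat (i choose j) * (-1)^j * x^(i-j)) * y^j)"
      using inner by (auto simp: sum_distrib_left mult.assoc intro!: sum.cong)
    also have "\<dots> = (\<Sum>j<n. b j * y^j)"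
      unfolding b_def sum_distrib_right by (rule sum.swap)
    finally show ?thesis .
  qed
  then show ?thesis by blast
qed

lemma sinc_meas[measurable]: "sinc_kernel c \<in> borel_measurable borel"
  unfolding sinc_kernel_def by measurable

definition Km :: "real \<Rightarrow> nat \<Rightarrow> real \<Rightarrow> real" where
  "Km c n t = (\<Sum>i<n. sin_coeff (Suc i) * c^(Suc i) * t^i / pi)"

lemma Km_err:
  assumes c: "c \<ge> 0"
  shows "\<bar>sinc_kernel c t - Km c n t\<bar> \<le> c^(Suc n) * \<bar>t\<bar>^n / (fact (Suc n) * pi)"
proof (cases "t = 0")
  case True
  show ?thesis
  proof (cases n)
    case 0
    then show ?thesis using True c by (simp add: sinc_kernel_def Km_def)
  next
    case (Suc m)
    have "Km c n 0 = c / pi" unfolding Km_def Suc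
      by (subst sum.lessThan_Suc_shift) (simp add: sin_coeff_def)
    then show ?thesis using True c by (simp add: sinc_kernel_def)
  qed
next
  case False
  have eq: "Km c n t * (pi * t) = (\<Sum>m<Suc n. sin_coeff m * (c * t) ^ m)"
  proof -
    have "Km c n t * (pi * t) = (\<Sum>i<n. sin_coeff (Suc i) * (c * t) ^ (Suc i))"
      unfolding Km_def sum_distrib_right by (intro sum.cong) (auto simp: power_mult_distrib)
    also have "\<dots> = (\<Sum>m<Suc n. sin_coeff m * (c * t) ^ m)"
      by (subst sum.lessThan_Suc_shift) (simp add: sin_coeff_def)
    finally show ?thesis .
  qed
  have "Km c n t = (Km c n t * (pi*t))/(pi*t)" using False by simp
  also have "\<dots> = (\<Sum>m<Suc n. sin_coeff m * (c * t) ^ m) / (pi * t)" unfolding eq ..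
  finally have "sinc_kernel c t - Km c n t = (sin (c * t) - (\<Sum>m<Suc n. sin_coeff m * (c * t) ^ m)) / (pi * t)"
    using False by (simp add: sinc_kernel_def diff_divide_distrib)
  then have "\<bar>sinc_kernel c t - Km c n t\<bar> = \<bar>sin (c * t) - (\<Sum>m<Suc n. sin_coeff m * (c * t) ^ m)\<bar> / (pi * \<bar>t\<bar>)"
    by (simp add: abs_mult)
  also have "\<dots> \<le> (inverse (fact (Suc n)) * \<bar>c * t\<bar> ^ Suc n) / (pi * \<bar>t\<bar>)"
    by (intro divide_right_mono Maclaurin_sin_bound) auto
  also have "\<dots> = c^(Suc n) * \<bar>t\<bar>^n / (fact (Suc n) * pi)"
  proof -
    have a: "\<bar>c*t\<bar>^Suc n = (c^Suc n * \<bar>t\<bar>^n) * \<bar>t\<bar>" using c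
      by (simp only: abs_mult power_mult_distrib power_Suc abs_of_nonneg) (simp add: algebra_simps)
    have "inverse F * ((A * \<bar>t\<bar>)) / (pi * \<bar>t\<bar>) = A / (F * pi)" for F A :: real
      using False by (simp add: field_simps)
    from this[of "fact (Suc n)" "c^Suc n * \<bar>t\<bar>^n"] show ?thesis unfolding a .
  qed
  finally show ?thesis .
qed

lemma Km_err2:
  assumes c: "c \<ge> 0" and t: "\<bar>t\<bar> \<le> 2"
  shows "\<bar>sinc_kernel c t - Km c n t\<bar> \<le> c^(Suc n) * 2^n / (fact (Suc n) * pi)"
proof -
  have "c^(Suc n) * \<bar>t\<bar>^n \<le> c^(Suc n) * 2^n"
    using c t by (intro mult_left_mono power_mono) auto
  then have "c^(Suc n) * \<bar>t\<bar>^n / (fact (Suc n) * pi) \<le> c^(Suc n) * 2^n / (fact (Suc n) * pi)"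
    by (intro divide_right_mono) auto
  then show ?thesis using Km_err[OF c, of t n] by linarith
qed

lemma sinc_even: "sinc_kernel c (-t) = sinc_kernel c t"
  by (simp add: sinc_kernel_def)

lemma sinc_bound: assumes "c \<ge> 0" shows "\<bar>sinc_kernel c t\<bar> \<le> c / pi"
proof (cases "t = 0")
  case True then show ?thesis using assms by (simp add: sinc_kernel_def)
next
  case False
  have "\<bar>sin (c*t)\<bar> \<le> \<bar>c * t\<bar>" by (rule abs_sin_x_le_abs_x)
  then have "\<bar>sin (c*t)\<bar> / (pi * \<bar>t\<bar>) \<le> (c * \<bar>t\<bar>) / (pi * \<bar>t\<bar>)"
    using assms by (intro divide_right_mono) (auto simp: abs_mult)
  then show ?thesis using False by (simp add: sinc_kernel_def abs_mult)
qed

definition Kop :: "real \<Rightarrow> (real \<Rightarrow> real) \<Rightarrow> real \<Rightarrow> real" where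
  "Kop c f x = integral\<^sup>L lborel (\<lambda>y. indicator JJ y * (sinc_kernel c (x - y) * f y))"

lemma Kop_int: assumes "c \<ge> 0" "L2 f"
  shows "integrable lborel (\<lambda>y. indicator JJ y * (sinc_kernel c (x - y) * f y))"
  by (rule L2_bdd_mult[OF assms(2), of _ "c/pi"]) (use sinc_bound[OF assms(1)] in auto)

lemma orth:
  assumes c: "c \<ge> 0" and L: "L2 \<phi>" "L2 \<psi>"
    and e1: "AE x in lborel. x \<in> JJ \<longrightarrow> Kop c \<phi> x = \<mu> * \<phi> x"
    and e2: "AE x in lborel. x \<in> JJ \<longrightarrow> Kop c \<psi> x = \<nu> * \<psi> x"
    and ne: "\<mu> \<noteq> \<nu>"
  shows "integral\<^sup>L lborel (\<lambda>x. indicator JJ x * (\<phi> x * \<psi> x)) = 0"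
proof -
  define G where "G x y = indicator JJ x * indicator JJ y * (sinc_kernel c (x - y) * \<phi> y * \<psi> x)" for x y
  have [measurable]: "\<phi> \<in> borel_measurable borel" "\<psi> \<in> borel_measurable borel" using L by auto
  have Gm[measurable]: "(\<lambda>(x,y). G x y) \<in> borel_measurable (lborel \<Otimes>\<^sub>M lborel)"
    unfolding G_def by measurable
  define A where "A = integral\<^sup>L lborel (\<lambda>y. \<bar>indicator JJ y * \<phi> y\<bar>)"
  have Gint_y: "integrable lborel (\<lambda>y. G x y)" for x
  proof -
    have "integrable lborel (\<lambda>y. (indicator JJ x * \<psi> x) * (indicator JJ y * (sinc_kernel c (x - y) * \<phi> y)))"
      using Kop_int[OF c L(1)] by auto
    then show ?thesis unfolding G_def by (simp add: algebra_simps)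
  qed
  have Gint: "integrable (lborel \<Otimes>\<^sub>M lborel) (\<lambda>(x,y). G x y)"
  proof (rule lborel_pair.Fubini_integrable)
    show "(\<lambda>(x,y). G x y) \<in> borel_measurable (lborel \<Otimes>\<^sub>M lborel)" by (rule Gm)
    show "AE x in lborel. integrable lborel (\<lambda>y. case (x, y) of (x, y) \<Rightarrow> G x y)"
      using Gint_y by simp
    show "integrable lborel (\<lambda>x. LINT y|lborel. norm (case (x, y) of (x, y) \<Rightarrow> G x y))"
    proof (rule ib)
      show "integrable lborel (\<lambda>x. (c / pi * A) * \<bar>indicator JJ x * \<psi> x\<bar>)"
        using L2_int[OF L(2)] by auto
      show "(\<lambda>x. LINT y|lborel. norm (case (x, y) of (x, y) \<Rightarrow> G x y)) \<in> borel_measurable lborel"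
        by measurable
      show "\<bar>LINT y|lborel. norm (case (x, y) of (x, y) \<Rightarrow> G x y)\<bar> \<le> \<bar>(c / pi * A) * \<bar>indicator JJ x * \<psi> x\<bar>\<bar>" for x
      proof -
        have "(LINT y|lborel. norm (G x y)) \<le> (LINT y|lborel. (c / pi * \<bar>indicator JJ x * \<psi> x\<bar>) * \<bar>indicator JJ y * \<phi> y\<bar>)"
        proof (rule integral_mono)
          show "integrable lborel (\<lambda>y. norm (G x y))" using Gint_y by auto
          show "integrable lborel (\<lambda>y. (c / pi * \<bar>indicator JJ x * \<psi> x\<bar>) * \<bar>indicator JJ y * \<phi> y\<bar>)"
            using L2_int[OF L(1)] by auto
          show "norm (G x y) \<le> (c / pi * \<bar>indicator JJ x * \<psi> x\<bar>) * \<bar>indicator JJ y * \<phi> y\<bar>" for y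
          proof -
            have "\<bar>sinc_kernel c (x - y)\<bar> * (\<bar>\<phi> y\<bar> * \<bar>\<psi> x\<bar>) \<le> c / pi * (\<bar>\<phi> y\<bar> * \<bar>\<psi> x\<bar>)"
              using sinc_bound[OF c] by (intro mult_right_mono) auto
            then show ?thesis unfolding G_def by (auto split: split_indicator simp: abs_mult algebra_simps)
          qed
        qed
        also have "\<dots> = (c / pi * A) * \<bar>indicator JJ x * \<psi> x\<bar>"
          unfolding A_def by (simp add: algebra_simps)
        finally show ?thesis using c by (simp add: A_def)
      qed
    qed
  qed
  have F: "(LINT y|lborel. LINT x|lborel. G x y) = (LINT x|lborel. LINT y|lborel. G x y)"
    using lborel_pair.Fubini_integral[of G] Gint by simp
  have rhs: "(LINT x|lborel. LINT y|lborel. G x y) = \<mu> * integral\<^sup>L lborel (\<lambda>x. indicator JJ x * (\<phi> x * \<psi> x))"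
  proof -
    have "(LINT x|lborel. LINT y|lborel. G x y) = (LINT x|lborel. indicator JJ x * \<psi> x * Kop c \<phi> x)"
      unfolding G_def Kop_def
      by (intro Bochner_Integration.integral_cong refl) (simp flip: integral_mult_right_zero add: algebra_simps)
    also have "\<dots> = (LINT x|lborel. \<mu> * (indicator JJ x * (\<phi> x * \<psi> x)))"
    proof (rule integral_cong_AE)
      show "(\<lambda>x. indicator JJ x * \<psi> x * Kop c \<phi> x) \<in> borel_measurable lborel"
        unfolding Kop_def by measurable
      show "(\<lambda>x. \<mu> * (indicator JJ x * (\<phi> x * \<psi> x))) \<in> borel_measurable lborel" by measurable
      show "AE x in lborel. indicator JJ x * \<psi> x * Kop c \<phi> x = \<mu> * (indicator JJ x * (\<phi> x * \<psi> x))"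
        using e1 by eventually_elim (auto split: split_indicator)
    qed
    finally show ?thesis by simp
  qed
  have lhs: "(LINT y|lborel. LINT x|lborel. G x y) = \<nu> * integral\<^sup>L lborel (\<lambda>x. indicator JJ x * (\<phi> x * \<psi> x))"
  proof -
    have "(LINT y|lborel. LINT x|lborel. G x y) = (LINT y|lborel. indicator JJ y * \<phi> y * Kop c \<psi> y)"
    proof (intro Bochner_Integration.integral_cong refl)
      fix y
      have "sinc_kernel c (x - y) = sinc_kernel c (y - x)" for x
        using sinc_even[of c "y - x"] by simp
      then show "(LINT x|lborel. G x y) = indicator JJ y * \<phi> y * Kop c \<psi> y"
        unfolding G_def Kop_def
        by (simp flip: integral_mult_right_zero add: algebra_simps)
    qed
    also have "\<dots> = (LINT y|lborel. \<nu> * (indicator JJ y * (\<phi> y * \<psi> y)))"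
    proof (rule integral_cong_AE)
      show "(\<lambda>y. indicator JJ y * \<phi> y * Kop c \<psi> y) \<in> borel_measurable lborel"
        unfolding Kop_def by measurable
      show "(\<lambda>y. \<nu> * (indicator JJ y * (\<phi> y * \<psi> y))) \<in> borel_measurable lborel" by measurable
      show "AE y in lborel. indicator JJ y * \<phi> y * Kop c \<psi> y = \<nu> * (indicator JJ y * (\<phi> y * \<psi> y))"
        using e2 by eventually_elim (auto split: split_indicator)
    qed
    finally show ?thesis by simp
  qed
  from F lhs rhs ne show ?thesis by auto
qed

lemma ip_sum: fixes \<psi> :: "'a \<Rightarrow> real \<Rightarrow> real" and g :: "real \<Rightarrow> real" and a :: "'a \<Rightarrow> real"
  assumes "finite T" "\<And>t. t \<in> T \<Longrightarrow> integrable lborel (\<lambda>x. indicator JJ x * (\<psi> t x * g x))"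
  shows "integral\<^sup>L lborel (\<lambda>x. indicator JJ x * ((\<Sum>t\<in>T. a t * \<psi> t x) * g x))
       = (\<Sum>t\<in>T. a t * integral\<^sup>L lborel (\<lambda>x. indicator JJ x * (\<psi> t x * g x)))"
proof -
  have "integral\<^sup>L lborel (\<lambda>x. indicator JJ x * ((\<Sum>t\<in>T. a t * \<psi> t x) * g x))
      = integral\<^sup>L lborel (\<lambda>x. \<Sum>t\<in>T. a t * (indicator JJ x * (\<psi> t x * g x)))"
    by (intro Bochner_Integration.integral_cong refl, simp only: sum_distrib_left sum_distrib_right,
        intro sum.cong refl) (simp add: mult_ac)
  also have "\<dots> = (\<Sum>t\<in>T. integral\<^sup>L lborel (\<lambda>x. a t * (indicator JJ x * (\<psi> t x * g x))))"
    using assms by (intro Bochner_Integration.integral_sum) auto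
  also have "\<dots> = (\<Sum>t\<in>T. a t * integral\<^sup>L lborel (\<lambda>x. indicator JJ x * (\<psi> t x * g x)))"
    by simp
  finally show ?thesis .
qed

lemma L2_pow: "L2 (\<lambda>y. y^j)"
  unfolding L2_def
proof
  show "(\<lambda>y::real. y^j) \<in> borel_measurable lborel" by measurable
  show "integrable lborel (\<lambda>x. indicator JJ x * (x^j)^2)"
  proof (rule intJ_bounded[of _ 1])
    show "(\<lambda>x::real. (x^j)^2) \<in> borel_measurable lborel" by measurable
    fix x :: real assume "x \<in> JJ"
    then have "\<bar>x\<bar> \<le> 1" by auto
    then have "\<bar>x\<bar>^(2*j) \<le> 1" by (simp add: power_le_one)
    then show "\<bar>(x^j)^2\<bar> \<le> 1" by (simp add: power_abs power_mult[symmetric] mult.commute)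
  qed
qed

lemma sum_ortho: fixes a G :: "'a \<Rightarrow> real"
  assumes "finite T" "s \<in> T" "\<And>t. t \<in> T \<Longrightarrow> t \<noteq> s \<Longrightarrow> G t = 0"
  shows "(\<Sum>t\<in>T. a t * G t) = a s * G s"
proof -
  have "(\<Sum>t\<in>T. a t * G t) = a s * G s + (\<Sum>t\<in>T - {s}. a t * G t)"
    using assms by (simp add: sum.remove)
  also have "(\<Sum>t\<in>T - {s}. a t * G t) = 0" using assms(3) by (intro sum.neutral) auto
  finally show ?thesis by simp
qed

lemma main_bound:
  fixes \<psi> :: "real \<Rightarrow> real \<Rightarrow> real"
  assumes c: "c \<ge> 0" and fin: "finite T" and card: "card T = Suc n"
    and L: "\<And>t. t \<in> T \<Longrightarrow> L2 (\<psi> t)"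
    and pos: "\<And>t. t \<in> T \<Longrightarrow> integral\<^sup>L lborel (\<lambda>x. indicator JJ x * (\<psi> t x * \<psi> t x)) > 0"
    and eig: "\<And>t. t \<in> T \<Longrightarrow> AE x in lborel. x \<in> JJ \<longrightarrow> Kop c (\<psi> t) x = t * \<psi> t x"
    and low: "\<And>t. t \<in> T \<Longrightarrow> lam \<le> t"
  shows "lam \<le> 2 * (c^(Suc n) * 2^n / (fact (Suc n) * pi))"
proof -
  define B where "B = c^(Suc n) * 2^n / (fact (Suc n) * pi)"
  have B0: "B \<ge> 0" using c by (simp add: B_def)
  define Gr where "Gr s t = integral\<^sup>L lborel (\<lambda>x. indicator JJ x * (\<psi> s x * \<psi> t x))" for s t
  have orth0: "Gr s t = 0" if "s \<in> T" "t \<in> T" "s \<noteq> t" for s t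
    unfolding Gr_def by (rule orth[OF c L[OF that(1)] L[OF that(2)] eig[OF that(1)] eig[OF that(2)] that(3)])
  have Gr_sym: "Gr s t = Gr t s" for s t unfolding Gr_def by (simp add: mult.commute)
  define w where "w t j = integral\<^sup>L lborel (\<lambda>y. indicator JJ y * (\<psi> t y * y^j))" for t j
  obtain \<alpha> where a0: "\<exists>t\<in>T. \<alpha> t \<noteq> 0" and acon: "\<forall>j<n. (\<Sum>t\<in>T. \<alpha> t * w t j) = 0"
    using kernel_exists[OF fin, of n w] card by auto
  define f where "f x = (\<Sum>t\<in>T. \<alpha> t * \<psi> t x)" for x
  have Lf: "L2 f" unfolding f_def using fin L by (intro L2_sum) auto
  have [measurable]: "f \<in> borel_measurable borel" using Lf by auto
  have intfs: "\<And>t. t \<in> T \<Longrightarrow> integrable lborel (\<lambda>x. indicator JJ x * (\<psi> t x * f x))"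
    using L2_mult[OF L Lf] by auto
  define N where "N = integral\<^sup>L lborel (\<lambda>x. indicator JJ x * (f x * f x))"
  have Nsum: "N = (\<Sum>t\<in>T. \<alpha> t * \<alpha> t * Gr t t)"
  proof -
    have e: "f x * f x = (\<Sum>t\<in>T. \<alpha> t * \<psi> t x) * f x" for x by (simp only: f_def)
    have "N = integral\<^sup>L lborel (\<lambda>x. indicator JJ x * ((\<Sum>t\<in>T. \<alpha> t * \<psi> t x) * f x))"
      by (simp only: N_def e)
    also have "\<dots> = (\<Sum>s\<in>T. \<alpha> s * integral\<^sup>L lborel (\<lambda>x. indicator JJ x * (\<psi> s x * f x)))"
      using fin intfs by (rule ip_sum)
    finally have "N = (\<Sum>s\<in>T. \<alpha> s * integral\<^sup>L lborel (\<lambda>x. indicator JJ x * (\<psi> s x * f x)))" .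
    also have "\<dots> = (\<Sum>s\<in>T. \<alpha> s * (\<Sum>t\<in>T. \<alpha> t * Gr t s))"
    proof (intro sum.cong refl arg_cong2[where f="(*)"])
      fix s assume s: "s \<in> T"
      have "integral\<^sup>L lborel (\<lambda>x. indicator JJ x * (\<psi> s x * f x)) = integral\<^sup>L lborel (\<lambda>x. indicator JJ x * (f x * \<psi> s x))"
        by (simp add: mult.commute)
      also have "\<dots> = (\<Sum>t\<in>T. \<alpha> t * Gr t s)"
        unfolding f_def Gr_def using fin L s by (subst ip_sum) (auto intro: L2_mult)
      finally show "integral\<^sup>L lborel (\<lambda>x. indicator JJ x * (\<psi> s x * f x)) = (\<Sum>t\<in>T. \<alpha> t * Gr t s)" .
    qed
    also have "\<dots> = (\<Sum>s\<in>T. \<alpha> s * (\<alpha> s * Gr s s))"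
      using fin orth0 by (intro sum.cong refl arg_cong2[where f="(*)"] sum_ortho) auto
    finally show ?thesis by (simp add: mult.assoc)
  qed
  have Npos: "N > 0"
  proof -
    obtain t0 where t0: "t0 \<in> T" "\<alpha> t0 \<noteq> 0" using a0 by auto
    have "0 < \<alpha> t0 * \<alpha> t0" using t0(2) not_real_square_gt_zero by blast
    then have "0 < \<alpha> t0 * \<alpha> t0 * Gr t0 t0" using pos[OF t0(1)] by (simp add: Gr_def)
    also have "\<dots> \<le> (\<Sum>t\<in>T. \<alpha> t * \<alpha> t * Gr t t)"
      using fin t0 pos by (intro member_le_sum) (auto simp: Gr_def less_imp_le)
    finally show ?thesis using Nsum by simp
  qed
  define h where "h x = (\<Sum>t\<in>T. (\<alpha> t * t) * \<psi> t x)" for x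
  have Lh: "L2 h" unfolding h_def using fin L by (intro L2_sum) auto
  define Q where "Q = integral\<^sup>L lborel (\<lambda>x. indicator JJ x * (h x * f x))"
  have Qsum: "Q = (\<Sum>t\<in>T. \<alpha> t * \<alpha> t * t * Gr t t)"
  proof -
    have "Q = (\<Sum>s\<in>T. (\<alpha> s * s) * integral\<^sup>L lborel (\<lambda>x. indicator JJ x * (\<psi> s x * f x)))"
      unfolding Q_def h_def using fin intfs by (rule ip_sum)
    also have "\<dots> = (\<Sum>s\<in>T. (\<alpha> s * s) * (\<Sum>t\<in>T. \<alpha> t * Gr t s))"
    proof (intro sum.cong refl arg_cong2[where f="(*)"])
      fix s assume s: "s \<in> T"
      have "integral\<^sup>L lborel (\<lambda>x. indicator JJ x * (\<psi> s x * f x)) = integral\<^sup>L lborel (\<lambda>x. indicator JJ x * (f x * \<psi> s x))"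
        by (simp add: mult.commute)
      also have "\<dots> = (\<Sum>t\<in>T. \<alpha> t * Gr t s)"
        unfolding f_def Gr_def using fin L s by (subst ip_sum) (auto intro: L2_mult)
      finally show "integral\<^sup>L lborel (\<lambda>x. indicator JJ x * (\<psi> s x * f x)) = (\<Sum>t\<in>T. \<alpha> t * Gr t s)" .
    qed
    also have "\<dots> = (\<Sum>s\<in>T. (\<alpha> s * s) * (\<alpha> s * Gr s s))"
      using fin orth0 by (intro sum.cong refl arg_cong2[where f="(*)"] sum_ortho) auto
    finally show ?thesis by (simp add: algebra_simps)
  qed
  have QN: "lam * N \<le> Q"
  proof -
    have "lam * N = (\<Sum>t\<in>T. lam * (\<alpha> t * \<alpha> t * Gr t t))" unfolding Nsum by (simp add: sum_distrib_left)
    also have "\<dots> \<le> (\<Sum>t\<in>T. t * (\<alpha> t * \<alpha> t * Gr t t))"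
    proof (intro sum_mono mult_right_mono)
      fix t assume t: "t \<in> T"
      show "lam \<le> t" using low[OF t] .
      show "0 \<le> \<alpha> t * \<alpha> t * Gr t t" using pos[OF t] by (simp add: Gr_def less_imp_le)
    qed
    also have "\<dots> = Q" unfolding Qsum by (simp add: algebra_simps)
    finally show ?thesis .
  qed
  have Lp: "\<And>j. L2 (\<lambda>y::real. y^j)" by (rule L2_pow)
  have cons: "integral\<^sup>L lborel (\<lambda>y. indicator JJ y * (y^j * f y)) = 0" if j: "j < n" for j
  proof -
    have "integral\<^sup>L lborel (\<lambda>y. indicator JJ y * (y^j * f y)) = integral\<^sup>L lborel (\<lambda>y. indicator JJ y * ((\<Sum>t\<in>T. \<alpha> t * \<psi> t y) * y^j))"
      by (simp add: f_def mult.commute)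
    also have "\<dots> = (\<Sum>t\<in>T. \<alpha> t * w t j)"
      unfolding w_def using fin L2_mult[OF L Lp] by (intro ip_sum) auto
    also have "\<dots> = 0" using acon j by auto
    finally show ?thesis .
  qed
  define A1 where "A1 = integral\<^sup>L lborel (\<lambda>y. \<bar>indicator JJ y * f y\<bar>)"
  have A1int: "integrable lborel (\<lambda>y. \<bar>indicator JJ y * f y\<bar>)" using L2_int[OF Lf] by auto
  have Kf_bound: "\<bar>Kop c f x\<bar> \<le> B * A1" if x: "x \<in> JJ" for x
  proof -
    define a where "a i = sin_coeff (Suc i) * c^(Suc i) / pi" for i
    obtain b where b: "\<And>y. (\<Sum>i<n. a i * (x - y)^i) = (\<Sum>j<n. b j * y^j)"
      using poly_shift[where a=a and n=n and x=x] by auto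
    have Kmb: "Km c n (x - y) = (\<Sum>j<n. b j * y^j)" for y
      unfolding b[symmetric] Km_def a_def by (intro sum.cong refl) (simp add: algebra_simps)
    have int_pj: "\<And>j. integrable lborel (\<lambda>y. indicator JJ y * (y^j * f y))"
      using L2_mult[OF Lp Lf] by auto
    have intKm: "integrable lborel (\<lambda>y. indicator JJ y * (Km c n (x - y) * f y))"
    proof -
      have "integrable lborel (\<lambda>y. \<Sum>j<n. b j * (indicator JJ y * (y^j * f y)))"
        using int_pj by (intro Bochner_Integration.integrable_sum) auto
      then show ?thesis unfolding Kmb by (simp add: sum_distrib_left sum_distrib_right mult_ac)
    qed
    have P0: "integral\<^sup>L lborel (\<lambda>y. indicator JJ y * (Km c n (x - y) * f y)) = 0"
    proof -
      have "integral\<^sup>L lborel (\<lambda>y. indicator JJ y * (Km c n (x - y) * f y))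
          = integral\<^sup>L lborel (\<lambda>y. indicator JJ y * ((\<Sum>j<n. b j * y^j) * f y))"
        unfolding Kmb ..
      also have "\<dots> = (\<Sum>j<n. b j * integral\<^sup>L lborel (\<lambda>y. indicator JJ y * (y^j * f y)))"
        using int_pj by (intro ip_sum) auto
      also have "\<dots> = 0" using cons by auto
      finally show ?thesis .
    qed
    have intK: "integrable lborel (\<lambda>y. indicator JJ y * (sinc_kernel c (x - y) * f y))"
      by (rule Kop_int[OF c Lf])
    have intE: "integrable lborel (\<lambda>y. indicator JJ y * ((sinc_kernel c (x - y) - Km c n (x - y)) * f y))"
    proof -
      have "integrable lborel (\<lambda>y. indicator JJ y * (sinc_kernel c (x - y) * f y) - indicator JJ y * (Km c n (x - y) * f y))"
        using intK intKm by (rule Bochner_Integration.integrable_diff)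
      then show ?thesis by (simp add: algebra_simps)
    qed
    have "Kop c f x = integral\<^sup>L lborel (\<lambda>y. indicator JJ y * ((sinc_kernel c (x - y) - Km c n (x - y)) * f y) + indicator JJ y * (Km c n (x - y) * f y))"
      unfolding Kop_def by (simp add: algebra_simps)
    also have "\<dots> = integral\<^sup>L lborel (\<lambda>y. indicator JJ y * ((sinc_kernel c (x - y) - Km c n (x - y)) * f y))"
      using intE intKm P0 by (simp add: Bochner_Integration.integral_add)
    finally have eqK: "Kop c f x = integral\<^sup>L lborel (\<lambda>y. indicator JJ y * ((sinc_kernel c (x - y) - Km c n (x - y)) * f y))" .
    have "\<bar>Kop c f x\<bar> \<le> integral\<^sup>L lborel (\<lambda>y. \<bar>indicator JJ y * ((sinc_kernel c (x - y) - Km c n (x - y)) * f y)\<bar>)"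
      unfolding eqK by (rule integral_abs_bound)
    also have "\<dots> \<le> integral\<^sup>L lborel (\<lambda>y. B * \<bar>indicator JJ y * f y\<bar>)"
    proof (rule integral_mono)
      show "integrable lborel (\<lambda>y. \<bar>indicator JJ y * ((sinc_kernel c (x - y) - Km c n (x - y)) * f y)\<bar>)"
        using intE by auto
      show "integrable lborel (\<lambda>y. B * \<bar>indicator JJ y * f y\<bar>)" using A1int by auto
      fix y
      show "\<bar>indicator JJ y * ((sinc_kernel c (x - y) - Km c n (x - y)) * f y)\<bar> \<le> B * \<bar>indicator JJ y * f y\<bar>"
      proof (cases "y \<in> JJ")
        case True
        then have "\<bar>x - y\<bar> \<le> 2" using x by auto
        then have "\<bar>sinc_kernel c (x - y) - Km c n (x - y)\<bar> \<le> B"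
          unfolding B_def by (rule Km_err2[OF c])
        then have "\<bar>sinc_kernel c (x - y) - Km c n (x - y)\<bar> * \<bar>f y\<bar> \<le> B * \<bar>f y\<bar>"
          by (rule mult_right_mono) simp
        then show ?thesis using True by (simp add: abs_mult)
      qed simp
    qed
    also have "\<dots> = B * A1" unfolding A1_def by simp
    finally show ?thesis .
  qed
  have Klin: "Kop c f x = (\<Sum>t\<in>T. \<alpha> t * Kop c (\<psi> t) x)" for x
  proof -
    have "Kop c f x = integral\<^sup>L lborel (\<lambda>y. indicator JJ y * ((\<Sum>t\<in>T. \<alpha> t * \<psi> t y) * sinc_kernel c (x - y)))"
      unfolding Kop_def f_def by (simp add: mult.commute)
    also have "\<dots> = (\<Sum>t\<in>T. \<alpha> t * integral\<^sup>L lborel (\<lambda>y. indicator JJ y * (\<psi> t y * sinc_kernel c (x - y))))"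
      using fin Kop_int[OF c L] by (intro ip_sum) (auto simp: mult.commute)
    also have "\<dots> = (\<Sum>t\<in>T. \<alpha> t * Kop c (\<psi> t) x)"
      unfolding Kop_def by (simp add: mult.commute)
    finally show ?thesis .
  qed
  have AEh: "AE x in lborel. x \<in> JJ \<longrightarrow> Kop c f x = h x"
  proof -
    have "AE x in lborel. \<forall>t\<in>T. x \<in> JJ \<longrightarrow> Kop c (\<psi> t) x = t * \<psi> t x"
      using fin eig by (intro eventually_ball_finite) auto
    then show ?thesis
    proof eventually_elim
      case (elim x)
      then show ?case unfolding Klin h_def by (auto intro!: sum.cong)
    qed
  qed
  have Qup: "Q \<le> B * A1 * A1"
  proof -
    have "Q \<le> integral\<^sup>L lborel (\<lambda>x. (B * A1) * \<bar>indicator JJ x * f x\<bar>)"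
      unfolding Q_def
    proof (rule integral_mono_AE)
      show "integrable lborel (\<lambda>x. indicator JJ x * (h x * f x))" using L2_mult[OF Lh Lf] .
      show "integrable lborel (\<lambda>x. (B * A1) * \<bar>indicator JJ x * f x\<bar>)" using A1int by auto
      show "AE x in lborel. indicator JJ x * (h x * f x) \<le> (B * A1) * \<bar>indicator JJ x * f x\<bar>"
        using AEh
      proof eventually_elim
        case (elim x)
        show ?case
        proof (cases "x \<in> JJ")
          case True
          then have "\<bar>h x\<bar> \<le> B * A1" using elim Kf_bound[OF True] by simp
          then have "\<bar>h x\<bar> * \<bar>f x\<bar> \<le> (B * A1) * \<bar>f x\<bar>" by (rule mult_right_mono) simp
          moreover have "h x * f x \<le> \<bar>h x\<bar> * \<bar>f x\<bar>" by (simp add: abs_mult[symmetric])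
          ultimately show ?thesis using True by simp
        qed simp
      qed
    qed
    also have "\<dots> = B * A1 * A1" unfolding A1_def by simp
    finally show ?thesis .
  qed
  have A1sq: "A1 * A1 \<le> 2 * N"
  proof -
    have int1: "integrable lborel (\<lambda>x. indicator JJ x * (f x * f x))" using L2_mult[OF Lf Lf] .
    have int3: "integrable lborel (\<lambda>x. (A1 * A1 / 4) * indicator JJ x)"
      by (intro integrable_mult_right integrable_real_indicator) auto
    have "0 \<le> integral\<^sup>L lborel (\<lambda>x. indicator JJ x * (f x * f x) - A1 * \<bar>indicator JJ x * f x\<bar> + (A1 * A1 / 4) * indicator JJ x)"
    proof (rule integral_nonneg_AE, intro AE_I2)
      fix x
      have "0 \<le> (\<bar>f x\<bar> - A1 / 2)^2" by simp
      then have "0 \<le> \<bar>f x\<bar> * \<bar>f x\<bar> - A1 * \<bar>f x\<bar> + A1 * A1 / 4"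
        by (simp add: power2_eq_square algebra_simps)
      then show "0 \<le> indicator JJ x * (f x * f x) - A1 * \<bar>indicator JJ x * f x\<bar> + (A1 * A1 / 4) * indicator JJ x"
        by (auto split: split_indicator simp: abs_mult[symmetric])
    qed
    also have "\<dots> = N - A1 * A1 + (A1 * A1 / 4) * 2"
      using int1 A1int int3
      by (simp add: Bochner_Integration.integral_add Bochner_Integration.integral_diff N_def A1_def)
    finally show ?thesis by simp
  qed
  have "lam * N \<le> B * (2 * N)"
  proof -
    have "B * A1 * A1 \<le> B * (2 * N)" using A1sq B0 by (simp add: mult.assoc mult_left_mono)
    then show ?thesis using QN Qup by linarith
  qed
  then have "lam \<le> 2 * B" using Npos by (simp add: mult.commute mult.left_commute)
  then show ?thesis unfolding B_def .
qed

lemma pow_fact_le_exp: assumes "(x::real) \<ge> 0" shows "x^k / fact k \<le> exp x"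
proof -
  have s: "(\<lambda>n. x^n /\<^sub>R fact n) sums exp x" by (rule exp_converges)
  have "sum (\<lambda>n. x^n /\<^sub>R fact n) {k} \<le> suminf (\<lambda>n. x^n /\<^sub>R fact n)"
    using s assms by (intro sum_le_suminf) (auto simp: sums_iff)
  then show ?thesis using s by (simp add: sums_iff divide_inverse mult.commute)
qed

lemma eig_props:
  assumes "is_Fc_eigenvalue c \<mu>"
  shows "\<exists>\<psi>. L2 \<psi> \<and> integral\<^sup>L lborel (\<lambda>x. indicator JJ x * (\<psi> x * \<psi> x)) > 0 \<and>
             (AE x in lborel. x \<in> JJ \<longrightarrow> Kop c \<psi> x = \<mu> * \<psi> x)"
proof -
  obtain \<psi> where m: "\<psi> \<in> borel_measurable lborel"
    and si: "set_integrable lborel {-1..1} (\<lambda>y. (\<psi> y)\<^sup>2)"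
    and nz: "\<not> (AE x in lborel. x \<in> {-1..1} \<longrightarrow> \<psi> x = 0)"
    and e: "AE x in lborel. x \<in> {-1..1} \<longrightarrow>
           (LINT y:{-1..1}|lborel. sinc_kernel c (x - y) * \<psi> y) = \<mu> * \<psi> x"
    using assms unfolding is_Fc_eigenvalue_def by blast
  have L: "L2 \<psi>" using m si unfolding L2_def set_integrable_def by simp
  have e': "AE x in lborel. x \<in> JJ \<longrightarrow> Kop c \<psi> x = \<mu> * \<psi> x"
    using e unfolding Kop_def set_lebesgue_integral_def by simp
  have int: "integrable lborel (\<lambda>x. indicator JJ x * (\<psi> x * \<psi> x))" using L2_mult[OF L L] .
  have nn: "0 \<le> integral\<^sup>L lborel (\<lambda>x. indicator JJ x * (\<psi> x * \<psi> x))"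
    by (intro integral_nonneg_AE AE_I2) (auto split: split_indicator)
  have "integral\<^sup>L lborel (\<lambda>x. indicator JJ x * (\<psi> x * \<psi> x)) \<noteq> 0"
  proof
    assume "integral\<^sup>L lborel (\<lambda>x. indicator JJ x * (\<psi> x * \<psi> x)) = 0"
    then have "AE x in lborel. indicator JJ x * (\<psi> x * \<psi> x) = 0"
      using integral_nonneg_eq_0_iff_AE[OF int] by (auto split: split_indicator)
    then have "AE x in lborel. x \<in> {-1..1} \<longrightarrow> \<psi> x = 0"
      by eventually_elim (auto split: split_indicator)
    with nz show False by blast
  qed
  with nn have "integral\<^sup>L lborel (\<lambda>x. indicator JJ x * (\<psi> x * \<psi> x)) > 0" by linarith
  with L e' show ?thesis by blast
qed

lemma prolate_bound:
  assumes c: "c \<ge> 0"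
  shows "prolate_eigenvalue c n \<le> 2 * (c^(Suc n) * 2^n / (fact (Suc n) * pi))"
proof -
  define P where "P = (\<lambda>x. is_Fc_eigenvalue c x \<and> 0 < x \<and>
                    finite {y. is_Fc_eigenvalue c y \<and> x < y} \<and>
                    card {y. is_Fc_eigenvalue c y \<and> x < y} = n)"
  have pe: "prolate_eigenvalue c n = (if \<exists>x. P x then THE x. P x else 0)"
    by (simp only: prolate_eigenvalue_def Let_def P_def)
  have B0: "0 \<le> 2 * (c^(Suc n) * 2^n / (fact (Suc n) * pi))" using c by simp
  show ?thesis
  proof (cases "\<exists>x. P x")
    case False
    then have "prolate_eigenvalue c n = 0" by (subst pe) (rule if_not_P[OF False])
    then show ?thesis using B0 by simp
  next
    case True
    then obtain x0 where Px0: "P x0" by blast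
    have uniq: "x = x0" if "P x" for x
    proof (rule ccontr)
      assume "x \<noteq> x0"
      then consider "x < x0" | "x0 < x" by linarith
      then show False
      proof cases
        case 1
        have "{y. is_Fc_eigenvalue c y \<and> x0 < y} \<subset> {y. is_Fc_eigenvalue c y \<and> x < y}"
          using 1 Px0 unfolding P_def by auto
        then have "card {y. is_Fc_eigenvalue c y \<and> x0 < y} < card {y. is_Fc_eigenvalue c y \<and> x < y}"
          using that unfolding P_def by (intro psubset_card_mono) auto
        then show False using that Px0 unfolding P_def by simp
      next
        case 2
        have "{y. is_Fc_eigenvalue c y \<and> x < y} \<subset> {y. is_Fc_eigenvalue c y \<and> x0 < y}"
          using 2 that unfolding P_def by auto
        then have "card {y. is_Fc_eigenvalue c y \<and> x < y} < card {y. is_Fc_eigenvalue c y \<and> x0 < y}"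
          using Px0 unfolding P_def by (intro psubset_card_mono) auto
        then show False using that Px0 unfolding P_def by simp
      qed
    qed
    have val: "prolate_eigenvalue c n = x0"
    proof -
      have "(THE x. P x) = x0" using Px0 uniq by (intro the_equality) blast+
      moreover have "\<exists>x. P x" using Px0 by blast
      ultimately show ?thesis by (subst pe) (simp only: if_P)
    qed
    define T where "T = insert x0 {y. is_Fc_eigenvalue c y \<and> x0 < y}"
    have S: "finite {y. is_Fc_eigenvalue c y \<and> x0 < y}" "card {y. is_Fc_eigenvalue c y \<and> x0 < y} = n"
      using Px0 unfolding P_def by blast+
    have nin: "x0 \<notin> {y. is_Fc_eigenvalue c y \<and> x0 < y}" by simp
    have fin: "finite T" unfolding T_def using S(1) by (rule finite.insertI)
    have card: "card T = Suc n" unfolding T_def using card_insert_disjoint[OF S(1) nin] S(2) by simp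
    have eigT: "is_Fc_eigenvalue c t" if "t \<in> T" for t using that Px0 unfolding T_def P_def by blast
    define \<psi> where "\<psi> t = (SOME \<psi>. L2 \<psi> \<and> integral\<^sup>L lborel (\<lambda>x. indicator JJ x * (\<psi> x * \<psi> x)) > 0 \<and>
             (AE x in lborel. x \<in> JJ \<longrightarrow> Kop c \<psi> x = t * \<psi> x))" for t
    have props: "L2 (\<psi> t) \<and> integral\<^sup>L lborel (\<lambda>x. indicator JJ x * (\<psi> t x * \<psi> t x)) > 0 \<and>
             (AE x in lborel. x \<in> JJ \<longrightarrow> Kop c (\<psi> t) x = t * \<psi> t x)" if "t \<in> T" for t
      unfolding \<psi>_def by (rule someI_ex[OF eig_props[OF eigT[OF that]]])
    have "x0 \<le> 2 * (c^(Suc n) * 2^n / (fact (Suc n) * pi))"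
      by (rule main_bound[OF c fin card, of \<psi>]) (use props in \<open>auto simp: T_def\<close>)
    then show ?thesis using val by simp
  qed
qed

theorem theorem3:
  fixes \<delta> :: real
  assumes "\<delta> > 0"
  shows "\<exists>N::nat. \<exists>\<kappa>::real. \<kappa> > 0 \<and>
           (\<forall>c::real. c \<ge> 0 \<longrightarrow> (\<forall>n::nat. real n \<ge> max (real N) (\<kappa> * c) \<longrightarrow>
              prolate_eigenvalue c n \<le> exp (- \<delta> * (real n - \<kappa> * c))))"
proof (intro exI conjI allI impI)
  define \<kappa> where "\<kappa> = 2 * exp \<delta> / \<delta>"
  show "\<kappa> > 0" using assms by (simp add: \<kappa>_def)
  fix c :: real and n :: nat
  assume c: "c \<ge> 0"
  have "prolate_eigenvalue c n \<le> 2 * (c^(Suc n) * 2^n / (fact (Suc n) * pi))"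
    by (rule prolate_bound[OF c])
  also have "\<dots> = (2*c)^(Suc n) / fact (Suc n) / pi"
    by (simp add: power_mult_distrib field_simps)
  also have "\<dots> \<le> (2*c)^(Suc n) / fact (Suc n)"
  proof -
    have g: "X / pi \<le> X" if "0 \<le> X" for X :: real
      using divide_left_mono[of 1 pi X] that pi_gt3 by simp
    show ?thesis by (rule g) (use c in simp)
  qed
  also have "\<dots> = (2*c*exp \<delta>)^(Suc n) / fact (Suc n) * exp (- \<delta> * real (Suc n))"
  proof -
    have "exp \<delta> ^ Suc n * exp (- \<delta> * real (Suc n)) = 1"
      by (simp add: exp_of_nat_mult[symmetric] exp_add[symmetric] mult.commute distrib_left)
    then show ?thesis by (simp add: power_mult_distrib)
  qed
  also have "\<dots> \<le> exp (2*c*exp \<delta>) * exp (- \<delta> * real (Suc n))"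
    using c by (intro mult_right_mono pow_fact_le_exp) auto
  also have "\<dots> = exp (2*c*exp \<delta> - \<delta> * real (Suc n))" by (simp add: exp_add[symmetric])
  also have "\<dots> \<le> exp (- \<delta> * (real n - \<kappa> * c))"
  proof -
    have "\<delta> * \<kappa> = 2 * exp \<delta>" using assms by (simp add: \<kappa>_def)
    then have h: "\<delta> * (\<kappa> * c) = 2 * exp \<delta> * c" by (simp add: mult.assoc[symmetric])
    have e1: "- \<delta> * (real n - \<kappa> * c) = - \<delta> * real n + \<delta> * (\<kappa> * c)" by (simp add: algebra_simps)
    have e2: "\<delta> * real (Suc n) = \<delta> * real n + \<delta>" by (simp add: algebra_simps)
    have e3: "2*c*exp \<delta> = 2 * exp \<delta> * c" by simp
    have "2*c*exp \<delta> - \<delta> * real (Suc n) \<le> - \<delta> * (real n - \<kappa> * c)"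
      unfolding e1 e2 e3 h using assms by linarith
    then show ?thesis by simp
  qed
  finally show "prolate_eigenvalue c n \<le> exp (- \<delta> * (real n - \<kappa> * c))" .
qed

end
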